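(* Let $(\mathcal{A},\varphi)$ be a tracial noncommutative probability space with universal enveloping traffic space $(\mathcal{B},\psi)=(\mathcal{G}(\mathcal{A}),\psi)$. Let $t\in\mathcal{G}(\mathcal{A})$ be (the class of) a graph monomial with vertices $v\neq w$ forming a 3-connection (i.e. $\lambda_t(v,w)\ge3$ in the underlying undirected multigraph). Then $t_{v\sim w}\equiv t\pmod\psi$, where $t_{v\sim w}$ is the graph monomial obtained from $t$ by identifying $v$ and $w$.
   Context: $(\mathcal{A},\varphi)$: unital complex algebra with unital tracial linear functional; free cumulants $\kappa_n$ determined by $\varphi(a_1\cdots a_n)=\sum_{\pi\in NC(n)}\prod_{B\in\pi}\kappa_{|B|}[(a_i)_{i\in B}]$. A graph monomial in $\mathcal{A}$ is a finite connected directed multigraph $(V,E,\mathrm{src},\mathrm{tgt})$ (loops, parallel edges allowed) with distinguished, not necessarily distinct, vertices $v_{\mathrm{in}},v_{\mathrm{out}}$ and edge labels in $\mathcal{A}$, up to isomorphism. $\iota(a)$: two vertices, one edge from $v_{\mathrm{in}}$ to $v_{\mathrm{out}}$ labelled $a$. Substitution $Z_g(t_1,\dots,t_K)$ for a connected bi-rooted multidigraph $g$ with ordered edges $e_1,\dots,e_K$ replaces each $e_i$ by a copy of $t_i$, identifying $\mathrm{src}(e_i)$ with the input and $\mathrm{tgt}(e_i)$ with the output of $t_i$; the product $t_1t_2$ identifies the input of $t_1$ with the output of $t_2$ (output of $t_1$ and input of $t_2$ become output and input). $\mathcal{G}(\mathcal{A})$ is the span of graph monomials modulo the span of $Z_g(\iota(a_1),\dots,\iota(a_K))-Z_g(P(\iota(b_1),\dots,\iota(b_n)),\iota(a_2),\dots)$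 (any edge position) for $a_1=P(b_1,\dots,b_n)$, $P$ a noncommutative polynomial. A test graph is a finite connected directed multigraph with labels in $\mathcal{A}$; $T^\pi$ identifies vertices in blocks of a partition $\pi$. Cactus: connected multigraph with each edge in exactly one simple cycle (loops, pairs of parallel edges count); pads = these cycles; oriented cactus: every pad directed. $\tau^0_\varphi[T]=\prod_{C\in\mathrm{Pads}(T)}\kappa_{n_C}[\gamma(e_1),\dots,\gamma(e_{n_C})]$ for oriented cacti (edges listed with $\mathrm{src}(e_i)=\mathrm{tgt}(e_{i+1})$, indices mod $n_C$), else $0$; $\tau_\varphi[T]=\sum_\pi\tau^0_\varphi[T^\pi]$ over partitions of the vertex set. $\psi(t)=\tau_\varphi[\tilde\Delta(t)]$ where $\tilde\Delta(t)$ identifies input and output and forgets roots (well defined on $\mathcal{G}(\mathcal{A})$). $s\equiv t\pmod\psi$ means $\psi((s-t)u)=0$ for all $u\in\mathcal{G}(\mathcal{A})$. $\lambda_t(v,w)$: minimal number of edges whose deletion disconnects $v$ and $w$. *)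

theory Defs
  imports Complex_Main "HOL-Library.Disjoint_Sets"
begin

definition complex_algebra :: "(complex \<Rightarrow> 'a::ring_1 \<Rightarrow> 'a) \<Rightarrow> bool" where
  "complex_algebra sc \<longleftrightarrow> vector_space sc \<and>
     (\<forall>c x y. sc c (x * y) = sc c x * y \<and> sc c (x * y) = x * sc c y)"

definition tracial_state :: "(complex \<Rightarrow> 'a::ring_1 \<Rightarrow> 'a) \<Rightarrow> ('a \<Rightarrow> complex) \<Rightarrow> bool" where
  "tracial_state sc \<phi> \<longleftrightarrow> Vector_Spaces.linear sc ((*) :: complex \<Rightarrow> complex \<Rightarrow> complex) \<phi>
     \<and> \<phi> 1 = 1 \<and> (\<forall>x y. \<phi> (x * y) = \<phi> (y * x))"

definition noncrossing :: "nat set set \<Rightarrow> bool" where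
  "noncrossing P \<longleftrightarrow> (\<forall>B\<in>P. \<forall>B'\<in>P. \<forall>a b c d. a < b \<and> b < c \<and> c < d \<and>
      a \<in> B \<and> c \<in> B \<and> b \<in> B' \<and> d \<in> B' \<longrightarrow> B = B')"

definition NC :: "nat \<Rightarrow> nat set set set" where
  "NC n = {P. partition_on {0..<n} P \<and> noncrossing P}"

text \<open>Free cumulants: the unique family (on nonempty argument lists) satisfying the
moment-cumulant formula; kappa applied to a list [a_1,...,a_n] is kappa_n[a_1,...,a_n].
Blocks are read in increasing order of indices (nths).\<close>

definition free_cumulant :: "('a::ring_1 \<Rightarrow> complex) \<Rightarrow> 'a list \<Rightarrow> complex" where
  "free_cumulant \<phi> = (THE \<kappa>. \<kappa> [] = 0 \<and>
     (\<forall>xs. xs \<noteq> [] \<longrightarrow> \<phi> (prod_list xs) = (\<Sum>P\<in>NC (length xs). \<Prod>B\<in>P. \<kappa> (nths xs B))))"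

record ('v, 'a) tgraph =
  verts :: "'v set"
  edges :: "nat set"
  src :: "nat \<Rightarrow> 'v"
  tgt :: "nat \<Rightarrow> 'v"
  lab :: "nat \<Rightarrow> 'a"

definition adj_rel :: "('v, 'a) tgraph \<Rightarrow> nat set \<Rightarrow> ('v \<times> 'v) set" where
  "adj_rel G F = {(src G e, tgt G e) | e. e \<in> F} \<union> {(tgt G e, src G e) | e. e \<in> F}"

definition joined :: "('v, 'a) tgraph \<Rightarrow> nat set \<Rightarrow> 'v \<Rightarrow> 'v \<Rightarrow> bool" where
  "joined G F u w \<longleftrightarrow> (u, w) \<in> (adj_rel G F)\<^sup>*"

definition wf_graph :: "('v, 'a) tgraph \<Rightarrow> bool" where
  "wf_graph G \<longleftrightarrow> finite (verts G) \<and> finite (edges G) \<and> verts G \<noteq> {} \<and>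
     (\<forall>e\<in>edges G. src G e \<in> verts G \<and> tgt G e \<in> verts G)"

definition connected_graph :: "('v, 'a) tgraph \<Rightarrow> bool" where
  "connected_graph G \<longleftrightarrow> (\<forall>u\<in>verts G. \<forall>w\<in>verts G. joined G (edges G) u w)"

text \<open>Graph monomials (representatives; vertices are naturals).\<close>
record 'a gmono =
  gr :: "(nat, 'a) tgraph"
  vin :: nat
  vout :: nat

definition wf_gmono :: "'a gmono \<Rightarrow> bool" where
  "wf_gmono t \<longleftrightarrow> wf_graph (gr t) \<and> connected_graph (gr t) \<and>
     vin t \<in> verts (gr t) \<and> vout t \<in> verts (gr t)"

definition merge_vertex :: "'v \<Rightarrow> 'v \<Rightarrow> 'v \<Rightarrow> 'v" where
  "merge_vertex v w u = (if u = w then v else u)"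

definition identify_graph :: "('v, 'a) tgraph \<Rightarrow> 'v \<Rightarrow> 'v \<Rightarrow> ('v, 'a) tgraph" where
  "identify_graph G v w = \<lparr> verts = merge_vertex v w ` verts G, edges = edges G,
      src = merge_vertex v w \<circ> src G, tgt = merge_vertex v w \<circ> tgt G, lab = lab G \<rparr>"

definition identify :: "'a gmono \<Rightarrow> nat \<Rightarrow> nat \<Rightarrow> 'a gmono" where
  "identify t v w = \<lparr> gr = identify_graph (gr t) v w,
      vin = merge_vertex v w (vin t), vout = merge_vertex v w (vout t) \<rparr>"

text \<open>Product t1 t2: disjoint union, identifying the input of t1 with the output of
t2; output of t1 becomes the output, input of t2 becomes the input.
Vertices/edges of t1 are encoded as 2x, those of t2 as 2x+1.\<close>
definition gm_mult :: "'a gmono \<Rightarrow> 'a gmono \<Rightarrow> 'a gmono" where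
  "gm_mult t1 t2 = (let h = (\<lambda>x. if x = vout t2 then 2 * vin t1 else 2 * x + 1) in
     \<lparr> gr = \<lparr> verts = (\<lambda>x. 2 * x) ` verts (gr t1) \<union> h ` verts (gr t2),
               edges = (\<lambda>e. 2 * e) ` edges (gr t1) \<union> (\<lambda>e. 2 * e + 1) ` edges (gr t2),
               src = (\<lambda>e. if even e then 2 * src (gr t1) (e div 2) else h (src (gr t2) (e div 2))),
               tgt = (\<lambda>e. if even e then 2 * tgt (gr t1) (e div 2) else h (tgt (gr t2) (e div 2))),
               lab = (\<lambda>e. if even e then lab (gr t1) (e div 2) else lab (gr t2) (e div 2)) \<rparr>,
       vin = h (vin t2), vout = 2 * vout t1 \<rparr>)"

definition delta :: "'a gmono \<Rightarrow> (nat, 'a) tgraph" where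
  "delta t = identify_graph (gr t) (vout t) (vin t)"

definition block_of :: "'v set set \<Rightarrow> 'v \<Rightarrow> 'v set" where
  "block_of P x = (THE B. B \<in> P \<and> x \<in> B)"

definition quotient_graph :: "('v, 'a) tgraph \<Rightarrow> 'v set set \<Rightarrow> ('v set, 'a) tgraph" where
  "quotient_graph G P = \<lparr> verts = P, edges = edges G,
      src = block_of P \<circ> src G, tgt = block_of P \<circ> tgt G, lab = lab G \<rparr>"

text \<open>Loops (n=1) and pairs of parallel edges (n=2) are included.\<close>
definition simple_cycle :: "('v, 'a) tgraph \<Rightarrow> nat set \<Rightarrow> bool" where
  "simple_cycle G C \<longleftrightarrow> (\<exists>es xs. es \<noteq> [] \<and> distinct es \<and> distinct xs \<and>
     length xs = length es \<and> set es = C \<and> C \<subseteq> edges G \<and>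
     (\<forall>i < length es. {src G (es ! i), tgt G (es ! i)} = {xs ! i, xs ! ((i + 1) mod length es)}))"

definition is_cactus :: "('v, 'a) tgraph \<Rightarrow> bool" where
  "is_cactus G \<longleftrightarrow> connected_graph G \<and> (\<forall>e\<in>edges G. \<exists>!C. simple_cycle G C \<and> e \<in> C)"

definition pads :: "('v, 'a) tgraph \<Rightarrow> nat set set" where
  "pads G = {C. simple_cycle G C}"

definition oriented_listing :: "('v, 'a) tgraph \<Rightarrow> nat set \<Rightarrow> nat list \<Rightarrow> bool" where
  "oriented_listing G C es \<longleftrightarrow> distinct es \<and> set es = C \<and>
     (\<forall>i < length es. src G (es ! i) = tgt G (es ! ((i + 1) mod length es)))"

definition oriented_cactus :: "('v, 'a) tgraph \<Rightarrow> bool" where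
  "oriented_cactus G \<longleftrightarrow> is_cactus G \<and> (\<forall>C\<in>pads G. \<exists>es. oriented_listing G C es)"

definition tau0 :: "('a::ring_1 \<Rightarrow> complex) \<Rightarrow> ('v, 'a) tgraph \<Rightarrow> complex" where
  "tau0 \<phi> G = (if oriented_cactus G then
      (\<Prod>C\<in>pads G. free_cumulant \<phi> (map (lab G) (SOME es. oriented_listing G C es)))
    else 0)"

definition tau :: "('a::ring_1 \<Rightarrow> complex) \<Rightarrow> ('v, 'a) tgraph \<Rightarrow> complex" where
  "tau \<phi> G = (\<Sum>P\<in>{P. partition_on (verts G) P}. tau0 \<phi> (quotient_graph G P))"

definition psi :: "('a::ring_1 \<Rightarrow> complex) \<Rightarrow> 'a gmono \<Rightarrow> complex" where
  "psi \<phi> t = tau \<phi> (delta t)"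

type_synonym 'a lcomb = "(complex \<times> 'a gmono) list"

definition wf_lcomb :: "'a lcomb \<Rightarrow> bool" where
  "wf_lcomb u \<longleftrightarrow> (\<forall>p\<in>set u. wf_gmono (snd p))"

definition lc_mult :: "'a lcomb \<Rightarrow> 'a lcomb \<Rightarrow> 'a lcomb" where
  "lc_mult xs ys = [(fst p * fst q, gm_mult (snd p) (snd q)). p \<leftarrow> xs, q \<leftarrow> ys]"

definition lc_diff :: "'a lcomb \<Rightarrow> 'a lcomb \<Rightarrow> 'a lcomb" where
  "lc_diff xs ys = xs @ map (\<lambda>p. (- fst p, snd p)) ys"

definition lc_psi :: "('a::ring_1 \<Rightarrow> complex) \<Rightarrow> 'a lcomb \<Rightarrow> complex" where
  "lc_psi \<phi> xs = (\<Sum>p\<leftarrow>xs. fst p * psi \<phi> (snd p))"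

definition equiv_mod_psi :: "('a::ring_1 \<Rightarrow> complex) \<Rightarrow> 'a lcomb \<Rightarrow> 'a lcomb \<Rightarrow> bool" where
  "equiv_mod_psi \<phi> s t \<longleftrightarrow> (\<forall>u. wf_lcomb u \<longrightarrow> lc_psi \<phi> (lc_mult (lc_diff s t) u) = 0)"

definition edge_conn :: "('v, 'a) tgraph \<Rightarrow> 'v \<Rightarrow> 'v \<Rightarrow> nat" where
  "edge_conn G v w = (LEAST k. \<exists>F \<subseteq> edges G. card F = k \<and> \<not> joined G (edges G - F) v w)"

end

theory Submission
  imports Defs "HOL-Library.Transitive_Closure_Table"
begin


definition rn :: "('v \<Rightarrow> 'w) \<Rightarrow> ('v, 'a) tgraph \<Rightarrow> ('w, 'a) tgraph" where
  "rn r G = \<lparr> verts = r ` verts G, edges = edges G, src = r \<circ> src G, tgt = r \<circ> tgt G, lab = lab G \<rparr>"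

definition giso :: "('v \<Rightarrow> 'w) \<Rightarrow> ('v, 'a) tgraph \<Rightarrow> ('w, 'a) tgraph \<Rightarrow> bool" where
  "giso k G G' \<longleftrightarrow> inj_on k (verts G) \<and> verts G' = k ` verts G \<and> edges G' = edges G \<and>
     lab G' = lab G \<and> (\<forall>e\<in>edges G. src G e \<in> verts G \<and> tgt G e \<in> verts G \<and>
        src G' e = k (src G e) \<and> tgt G' e = k (tgt G e))"

lemma giso_sym:
  assumes "giso k G G'" shows "giso (inv_into (verts G) k) G' G"
proof -
  have inj: "inj_on k (verts G)" and vv: "verts G' = k ` verts G" using assms by (auto simp: giso_def)
  show ?thesis using assms unfolding giso_def
    by (auto simp: inj_on_inv_into inv_into_image_cancel inv_into_f_f)
qed

lemma rtrancl_map_gen: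
  assumes "(x, y) \<in> R\<^sup>*" and "\<And>a b. (a, b) \<in> R \<Longrightarrow> (f a, f b) \<in> S"
  shows "(f x, f y) \<in> S\<^sup>*"
  using assms(1)
proof (induction rule: rtrancl_induct)
  case base then show ?case by simp
next
  case (step y z) then show ?case using assms(2) by (meson rtrancl.rtrancl_into_rtrancl)
qed

lemma giso_joined:
  assumes "giso k G G'" "F \<subseteq> edges G" "joined G F x y"
  shows "joined G' F (k x) (k y)"
proof -
  have "\<And>a b. (a, b) \<in> adj_rel G F \<Longrightarrow> (k a, k b) \<in> adj_rel G' F"
    using assms(1,2) unfolding adj_rel_def giso_def by fastforce
  then show ?thesis using assms(3) unfolding joined_def using rtrancl_map_gen[where f=k] by blast
qed

lemma giso_connected:
  assumes "giso k G G'" "connected_graph G" shows "connected_graph G'"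
  unfolding connected_graph_def
proof (intro ballI)
  fix u w assume "u \<in> verts G'" "w \<in> verts G'"
  then obtain u0 w0 where "u0 \<in> verts G" "w0 \<in> verts G" "u = k u0" "w = k w0"
    using assms(1) unfolding giso_def by blast
  then show "joined G' (edges G') u w"
    using giso_joined[OF assms(1), of "edges G" u0 w0] assms(1,2) unfolding connected_graph_def giso_def by simp
qed

lemma giso_simple_cycle:
  assumes "giso k G G'" "simple_cycle G C" shows "simple_cycle G' C"
proof -
  obtain es xs where h: "es \<noteq> []" "distinct es" "distinct xs" "length xs = length es" "set es = C"
    "C \<subseteq> edges G" "\<forall>i < length es. {src G (es ! i), tgt G (es ! i)} = {xs ! i, xs ! ((i + 1) mod length es)}"
    using assms(2) unfolding simple_cycle_def by blast
  have E: "edges G' = edges G" and I: "inj_on k (verts G)"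
    and S: "\<forall>e\<in>edges G. src G e \<in> verts G \<and> tgt G e \<in> verts G \<and> src G' e = k (src G e) \<and> tgt G' e = k (tgt G e)"
    using assms(1) unfolding giso_def by auto
  have ein: "\<And>i. i < length es \<Longrightarrow> es ! i \<in> edges G" using h(5,6) nth_mem by blast
  have "set xs \<subseteq> verts G"
  proof
    fix x assume "x \<in> set xs"
    then obtain i where i: "i < length xs" "x = xs ! i" by (metis in_set_conv_nth)
    then have "x \<in> {src G (es ! i), tgt G (es ! i)}" using h(4,7) by auto
    then show "x \<in> verts G" using S ein[of i] i h(4) by auto
  qed
  then have d: "distinct (map k xs)" using h(3) I by (simp add: distinct_map inj_on_subset)
  have "\<forall>i < length es. {src G' (es ! i), tgt G' (es ! i)} = {map k xs ! i, map k xs ! ((i + 1) mod length es)}"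
  proof (intro allI impI)
    fix i assume i: "i < length es"
    have m: "(i + 1) mod length es < length es" using i by (metis length_greater_0_conv list.size(3) mod_less_divisor not_less0)
    have "{src G' (es ! i), tgt G' (es ! i)} = k ` {src G (es ! i), tgt G (es ! i)}" using S ein[OF i] by auto
    also have "\<dots> = k ` {xs ! i, xs ! ((i + 1) mod length es)}" using h(7) i by simp
    also have "\<dots> = {map k xs ! i, map k xs ! ((i + 1) mod length es)}" using i m h(4) by simp
    finally show "{src G' (es ! i), tgt G' (es ! i)} = {map k xs ! i, map k xs ! ((i + 1) mod length es)}" .
  qed
  then show ?thesis unfolding simple_cycle_def
    apply (intro exI[of _ es] exI[of _ "map k xs"]) using h d E by auto
qed

lemma giso_simple_cycle_iff:
  assumes "giso k G G'" shows "simple_cycle G' C = simple_cycle G C"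
  using giso_simple_cycle[OF assms] giso_simple_cycle[OF giso_sym[OF assms]] by blast

lemma giso_olist:
  assumes "giso k G G'" "C \<subseteq> edges G" "oriented_listing G C es" shows "oriented_listing G' C es"
proof -
  have S: "\<forall>e\<in>edges G. src G' e = k (src G e) \<and> tgt G' e = k (tgt G e)"
    using assms(1) unfolding giso_def by auto
  show ?thesis using assms(3) unfolding oriented_listing_def
  proof (intro conjI allI impI; (elim conjE)?)
    fix i assume d: "distinct es" "set es = C" and o: "\<forall>i<length es. src G (es ! i) = tgt G (es ! ((i + 1) mod length es))"
      and i: "i < length es"
    have m: "(i + 1) mod length es < length es" using i by (metis length_greater_0_conv list.size(3) mod_less_divisor not_less0)
    have "es ! i \<in> edges G" "es ! ((i + 1) mod length es) \<in> edges G" using i m d assms(2) nth_mem by blast+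
    then show "src G' (es ! i) = tgt G' (es ! ((i + 1) mod length es))" using S o i by simp
  qed auto
qed

lemma giso_tau0:
  assumes "giso k G G'" shows "tau0 \<phi> G' = tau0 \<phi> G"
proof -
  have sym: "giso (inv_into (verts G) k) G' G" by (rule giso_sym[OF assms])
  have E: "edges G' = edges G" and L: "lab G' = lab G" using assms unfolding giso_def by auto
  have P: "pads G' = pads G" unfolding pads_def using giso_simple_cycle_iff[OF assms] by blast
  have C: "is_cactus G' = is_cactus G" unfolding is_cactus_def
    using giso_simple_cycle_iff[OF assms] giso_connected[OF assms] giso_connected[OF sym] E by auto
  have padsub: "\<And>C. C \<in> pads G \<Longrightarrow> C \<subseteq> edges G" unfolding pads_def simple_cycle_def by blast
  have O: "\<And>C. C \<in> pads G \<Longrightarrow> oriented_listing G' C = oriented_listing G C"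
    apply (rule ext) using giso_olist[OF assms] giso_olist[OF sym] padsub E by metis
  have OC: "oriented_cactus G' = oriented_cactus G" unfolding oriented_cactus_def using C P O by auto
  show ?thesis unfolding tau0_def using OC P O L by (auto intro!: prod.cong)
qed



lemma block_of_eq:
  assumes "partition_on A P" "B \<in> P" "x \<in> B" shows "block_of P x = B"
  unfolding block_of_def
proof (rule the_equality)
  show "B \<in> P \<and> x \<in> B" using assms by simp
  fix B' assume "B' \<in> P \<and> x \<in> B'"
  then show "B' = B" using assms unfolding partition_on_def disjoint_def by blast
qed

lemma block_of_in:
  assumes "partition_on A P" "x \<in> A" shows "block_of P x \<in> P \<and> x \<in> block_of P x"
proof -
  obtain B where "B \<in> P" "x \<in> B" using assms unfolding partition_on_def by blast
  then show ?thesis using block_of_eq[OF assms(1)] by simp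
qed

definition resp :: "('v \<Rightarrow> 'w) \<Rightarrow> 'v set \<Rightarrow> 'v set set \<Rightarrow> bool" where
  "resp r V P \<longleftrightarrow> (\<forall>B\<in>P. \<forall>x\<in>V. \<forall>y\<in>B. r x = r y \<longrightarrow> x \<in> B)"

definition wfe :: "('v, 'a) tgraph \<Rightarrow> bool" where
  "wfe G \<longleftrightarrow> (\<forall>e\<in>edges G. src G e \<in> verts G \<and> tgt G e \<in> verts G)"

lemma quot_in:
  assumes "partition_on (verts G) P" "wfe G" "e \<in> edges G"
  shows "src (quotient_graph G P) e \<in> P" "tgt (quotient_graph G P) e \<in> P"
  using assms block_of_in[OF assms(1)] unfolding wfe_def quotient_graph_def by auto

lemma tau_rn:
  fixes G :: "('v, 'a::ring_1) tgraph" and r :: "'v \<Rightarrow> 'w"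
  assumes wf: "wfe G"
  shows "tau \<phi> (rn r G) = (\<Sum>P\<in>{P. partition_on (verts G) P \<and> resp r (verts G) P}. tau0 \<phi> (quotient_graph G P))"
proof -
  define V where "V = verts G"
  define k where "k = (\<lambda>B. V \<inter> r -` B)"
  have vr: "verts (rn r G) = r ` V" unfolding rn_def V_def by simp
  have A: "partition_on V (k ` Q) \<and> resp r V (k ` Q)" if Q: "partition_on (r ` V) Q" for Q
  proof -
    have "\<Union>(k ` Q) = V"
    proof
      show "\<Union>(k ` Q) \<subseteq> V" unfolding k_def by blast
      show "V \<subseteq> \<Union>(k ` Q)"
      proof
        fix x assume x: "x \<in> V"
        then have "r x \<in> \<Union>Q" using Q unfolding partition_on_def by simp
        then obtain B where "B \<in> Q" "r x \<in> B" by blast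
        then show "x \<in> \<Union>(k ` Q)" using x unfolding k_def by blast
      qed
    qed
    moreover have "disjoint (k ` Q)"
      unfolding disjoint_def
    proof (intro ballI impI)
      fix X Y assume X: "X \<in> k ` Q" and Y: "Y \<in> k ` Q" and ne: "X \<noteq> Y"
      obtain B1 where B1: "B1 \<in> Q" "X = k B1" using X by blast
      obtain B2 where B2: "B2 \<in> Q" "Y = k B2" using Y by blast
      have "B1 \<noteq> B2" using ne B1 B2 by blast
      then have "B1 \<inter> B2 = {}" using B1 B2 Q unfolding partition_on_def disjoint_def by blast
      then show "X \<inter> Y = {}" using B1 B2 unfolding k_def by blast
    qed
    moreover have "{} \<notin> k ` Q"
    proof
      assume "{} \<in> k ` Q" then obtain B where B: "B \<in> Q" "k B = {}" by auto
      have "B \<noteq> {}" "B \<subseteq> r ` V" using B(1) Q unfolding partition_on_def by auto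
      then obtain x where "x \<in> V" "r x \<in> B" by blast
      then show False using B(2) unfolding k_def by auto
    qed
    moreover have "resp r V (k ` Q)" unfolding resp_def k_def by auto
    ultimately show ?thesis unfolding partition_on_def by blast
  qed
  have B: "partition_on (r ` V) ((\<lambda>B. r ` B) ` P)" if P: "partition_on V P" "resp r V P" for P
  proof -
    have "\<Union>((\<lambda>B. r ` B) ` P) = r ` V" using P unfolding partition_on_def by auto
    moreover have "disjoint ((\<lambda>B. r ` B) ` P)"
      unfolding disjoint_def
    proof (intro ballI impI)
      fix X Y assume X: "X \<in> (\<lambda>B. r ` B) ` P" and Y: "Y \<in> (\<lambda>B. r ` B) ` P" and ne: "X \<noteq> Y"
      obtain B1 where B1: "B1 \<in> P" "X = r ` B1" using X by blast
      obtain B2 where B2: "B2 \<in> P" "Y = r ` B2" using Y by blast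
      show "X \<inter> Y = {}"
      proof (rule ccontr)
        assume "X \<inter> Y \<noteq> {}"
        then obtain x1 x2 where x: "x1 \<in> B1" "x2 \<in> B2" "r x1 = r x2" using B1 B2 by blast
        have "x2 \<in> V" using x B2 P unfolding partition_on_def by blast
        then have "x2 \<in> B1" using P(2) B1 x unfolding resp_def by metis
        then have "B1 = B2" using x B1 B2 P unfolding partition_on_def disjoint_def by blast
        then show False using ne B1 B2 by simp
      qed
    qed
    moreover have "{} \<notin> (\<lambda>B. r ` B) ` P" using P unfolding partition_on_def by auto
    ultimately show ?thesis unfolding partition_on_def by blast
  qed
  have C: "k ` ((\<lambda>B. r ` B) ` P) = P" if P: "partition_on V P" "resp r V P" for P
  proof -
    have "k (r ` B) = B" if "B \<in> P" for B
    proof -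
      have "B \<subseteq> V" using that P unfolding partition_on_def by blast
      then show ?thesis using that P(2) unfolding k_def resp_def by blast
    qed
    then show ?thesis by (simp add: image_image)
  qed
  have D: "(\<lambda>B. r ` B) ` (k ` Q) = Q" if Q: "partition_on (r ` V) Q" for Q
  proof -
    have "r ` (k B) = B" if "B \<in> Q" for B
    proof -
      have "B \<subseteq> r ` V" using that Q unfolding partition_on_def by blast
      then show ?thesis unfolding k_def by blast
    qed
    then show ?thesis by (simp add: image_image)
  qed
  have E: "tau0 \<phi> (quotient_graph G (k ` Q)) = tau0 \<phi> (quotient_graph (rn r G) Q)"
    if Q: "partition_on (r ` V) Q" for Q
  proof (rule giso_tau0)
    have kQ: "partition_on V (k ` Q)" using A[OF Q] by blast
    have inj: "inj_on k Q"
    proof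
      fix B1 B2 assume b: "B1 \<in> Q" "B2 \<in> Q" "k B1 = k B2"
      have "B1 \<subseteq> r ` V" "B2 \<subseteq> r ` V" using b Q unfolding partition_on_def by blast+
      then show "B1 = B2" using b(3) unfolding k_def by blast
    qed
    show "giso k (quotient_graph (rn r G) Q) (quotient_graph G (k ` Q))"
      unfolding giso_def
    proof (intro conjI ballI)
      show "inj_on k (verts (quotient_graph (rn r G) Q))" using inj by (simp add: quotient_graph_def)
      show "verts (quotient_graph G (k ` Q)) = k ` verts (quotient_graph (rn r G) Q)"
        by (simp add: quotient_graph_def)
      show "edges (quotient_graph G (k ` Q)) = edges (quotient_graph (rn r G) Q)"
        by (simp add: quotient_graph_def rn_def)
      show "lab (quotient_graph G (k ` Q)) = lab (quotient_graph (rn r G) Q)"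
        by (simp add: quotient_graph_def rn_def)
      fix e assume e: "e \<in> edges (quotient_graph (rn r G) Q)"
      then have e': "e \<in> edges G" by (simp add: quotient_graph_def rn_def)
      have sv: "src G e \<in> V" "tgt G e \<in> V" using wf e' unfolding wfe_def V_def by auto
      have bs: "block_of Q (r (src G e)) \<in> Q \<and> r (src G e) \<in> block_of Q (r (src G e))"
        using block_of_in[OF Q] sv by blast
      have bt: "block_of Q (r (tgt G e)) \<in> Q \<and> r (tgt G e) \<in> block_of Q (r (tgt G e))"
        using block_of_in[OF Q] sv by blast
      show "src (quotient_graph (rn r G) Q) e \<in> verts (quotient_graph (rn r G) Q)"
        using bs by (simp add: quotient_graph_def rn_def)
      show "tgt (quotient_graph (rn r G) Q) e \<in> verts (quotient_graph (rn r G) Q)"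
        using bt by (simp add: quotient_graph_def rn_def)
      have "block_of (k ` Q) (src G e) = k (block_of Q (r (src G e)))"
        by (rule block_of_eq[OF kQ]) (use bs sv in \<open>auto simp: k_def\<close>)
      then show "src (quotient_graph G (k ` Q)) e = k (src (quotient_graph (rn r G) Q) e)"
        by (simp add: quotient_graph_def rn_def)
      have "block_of (k ` Q) (tgt G e) = k (block_of Q (r (tgt G e)))"
        by (rule block_of_eq[OF kQ]) (use bt sv in \<open>auto simp: k_def\<close>)
      then show "tgt (quotient_graph G (k ` Q)) e = k (tgt (quotient_graph (rn r G) Q) e)"
        by (simp add: quotient_graph_def rn_def)
    qed
  qed
  have "tau \<phi> (rn r G) = (\<Sum>Q\<in>{Q. partition_on (r ` V) Q}. tau0 \<phi> (quotient_graph (rn r G) Q))"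
    unfolding tau_def vr ..
  also have "\<dots> = (\<Sum>P\<in>{P. partition_on V P \<and> resp r V P}. tau0 \<phi> (quotient_graph G P))"
  proof (rule sum.reindex_bij_witness[where j = "\<lambda>Q. k ` Q" and i = "\<lambda>P. (\<lambda>B. r ` B) ` P"])
    show "\<And>a. a \<in> {Q. partition_on (r ` V) Q} \<Longrightarrow> (\<lambda>B. r ` B) ` k ` a = a" using D by blast
    show "\<And>a. a \<in> {Q. partition_on (r ` V) Q} \<Longrightarrow> k ` a \<in> {P. partition_on V P \<and> resp r V P}" using A by blast
    show "\<And>b. b \<in> {P. partition_on V P \<and> resp r V P} \<Longrightarrow> k ` (\<lambda>B. r ` B) ` b = b" using C by blast
    show "\<And>b. b \<in> {P. partition_on V P \<and> resp r V P} \<Longrightarrow> (\<lambda>B. r ` B) ` b \<in> {Q. partition_on (r ` V) Q}" using B by blast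
    show "\<And>a. a \<in> {Q. partition_on (r ` V) Q} \<Longrightarrow> tau0 \<phi> (quotient_graph G (k ` a)) = tau0 \<phi> (quotient_graph (rn r G) a)"
      using E by blast
  qed
  finally show ?thesis unfolding V_def .
qed



lemma adj_rel_iff: "(u, w) \<in> adj_rel H F \<longleftrightarrow> (\<exists>e\<in>F. {src H e, tgt H e} = {u, w})"
  unfolding adj_rel_def by (auto simp: doubleton_eq_iff)

lemma adj_rel_sym: "(adj_rel H F)\<inverse> = adj_rel H F"
  unfolding adj_rel_def by auto

lemma joined_sym: "(x, y) \<in> (adj_rel H F)\<^sup>* \<Longrightarrow> (y, x) \<in> (adj_rel H F)\<^sup>*"
  using rtrancl_converseI[of x y "adj_rel H F"] adj_rel_sym[of H F] by simp

lemma mod_pred_aux: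
  fixes i j n :: nat
  assumes "i < n" "j < n" "(i + 1) mod n = j" shows "i = (j + n - 1) mod n"
proof (cases "i + 1 = n")
  case True then show ?thesis using assms by auto
next
  case False then have "i + 1 < n" using assms by simp
  then have "j = i + 1" using assms by simp
  then show ?thesis using assms by simp
qed

lemma mod_suc_inj:
  fixes i j n :: nat
  assumes "i < n" "j < n" "(i + 1) mod n = (j + 1) mod n" shows "i = j"
proof (cases "i + 1 = n")
  case True
  then have "(j + 1) mod n = 0" using assms by simp
  then have "j + 1 = n" using assms
    by (metis Suc_eq_plus1 Suc_lessI mod_less mod_self zero_neq_one add_eq_0_iff_both_eq_0)
  then show ?thesis using True by simp
next
  case False then have "i + 1 < n" using assms by simp
  then have "(j + 1) mod n = i + 1" using assms by simp
  then have "j + 1 \<noteq> n" using False by auto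
  then have "j + 1 < n" using assms by simp
  then show ?thesis using assms \<open>i + 1 < n\<close> by simp
qed

lemma path_avoid:
  assumes "rtrancl_path (\<lambda>x y. (x, y) \<in> adj_rel H E) x zs y" "p \<notin> set (x # zs)"
    "\<forall>g\<in>F. p \<in> {src H g, tgt H g}"
  shows "(x, y) \<in> (adj_rel H (E - F))\<^sup>*"
  using assms
proof (induction rule: rtrancl_path.induct)
  case (base x) then show ?case by simp
next
  case (step x y ys z)
  from step.hyps(1) obtain e where e: "e \<in> E" "{src H e, tgt H e} = {x, y}" using adj_rel_iff by metis
  have "p \<noteq> x" "p \<noteq> y" using step.prems by auto
  then have "e \<notin> F" using e step.prems(2) by auto
  then have "(x, y) \<in> adj_rel H (E - F)" using e adj_rel_iff by (metis DiffI)
  moreover have "(y, z) \<in> (adj_rel H (E - F))\<^sup>*" using step by auto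
  ultimately show ?case by (rule converse_rtrancl_into_rtrancl)
qed

lemma cactus_cut:
  assumes uniq: "\<forall>e\<in>edges H. \<exists>!C. simple_cycle H C \<and> e \<in> C"
    and pq: "p \<noteq> q"
    and all: "\<forall>F\<subseteq>edges H. card F \<le> 2 \<longrightarrow> joined H (edges H - F) p q"
  shows False
proof -
  define E where "E = edges H"
  define R where "R = (\<lambda>F x y. (x, y) \<in> adj_rel H F)"
  have "joined H E p q" using all[rule_format, of "{}"] unfolding E_def by simp
  then have "(R E)\<^sup>*\<^sup>* p q" unfolding joined_def R_def by (simp add: rtranclp_rtrancl_eq)
  then obtain ys0 where "rtrancl_path (R E) p ys0 q" using rtranclp_eq_rtrancl_path by metis
  then obtain ys where path: "rtrancl_path (R E) p ys q" and dys: "distinct (p # ys)"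
    using rtrancl_path_distinct by metis
  obtain x1 zs where ys: "ys = x1 # zs" and px1: "R E p x1" and rest: "rtrancl_path (R E) x1 zs q"
    using path pq by (cases rule: rtrancl_path.cases) auto
  have p_x1: "p \<noteq> x1" using dys ys by auto
  have p_rest: "p \<notin> set (x1 # zs)" using dys ys by auto
  obtain e1 where e1: "e1 \<in> E" "{src H e1, tgt H e1} = {p, x1}"
    using px1 unfolding R_def adj_rel_iff by metis
  obtain C where C: "simple_cycle H C" "e1 \<in> C" and Cu: "\<And>C'. simple_cycle H C' \<and> e1 \<in> C' \<Longrightarrow> C' = C"
    using uniq e1(1) unfolding E_def by metis
  obtain es xs where h: "es \<noteq> []" "distinct es" "distinct xs" "length xs = length es" "set es = C"
    "C \<subseteq> edges H" "\<forall>i < length es. {src H (es ! i), tgt H (es ! i)} = {xs ! i, xs ! ((i + 1) mod length es)}"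
    using C(1) unfolding simple_cycle_def by blast
  define n where "n = length es"
  have n0: "0 < n" using h(1) unfolding n_def by simp
  obtain j where j: "j < n" "es ! j = e1" using C(2) h(5) unfolding n_def by (metis in_set_conv_nth)
  define j1 where "j1 = (j + 1) mod n"
  have j1n: "j1 < n" unfolding j1_def using n0 by simp
  have ej: "{xs ! j, xs ! j1} = {p, x1}" using h(7) j e1(2) unfolding n_def j1_def by metis
  have xsi: "\<And>a b. a < n \<Longrightarrow> b < n \<Longrightarrow> xs ! a = xs ! b \<longleftrightarrow> a = b"
    using h(3,4) unfolding n_def by (simp add: nth_eq_iff_index_eq)
  have n2: "2 \<le> n"
  proof (rule ccontr)
    assume "\<not> 2 \<le> n" then have "n = 1" using n0 by simp
    then have "j = 0" "j1 = 0" using j unfolding j1_def by auto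
    then show False using ej p_x1 by (auto simp: doubleton_eq_iff)
  qed
  define jf where "jf = (if xs ! j = p then (j + n - 1) mod n else j1)"
  have jfn: "jf < n" unfolding jf_def using n0 j1n by simp
  have jfj: "jf \<noteq> j"
  proof (cases "xs ! j = p")
    case True
    show ?thesis
    proof (cases "j = 0")
      case True then show ?thesis using \<open>xs ! j = p\<close> n2 unfolding jf_def by simp
    next
      case False
      then have "(j + n - 1) mod n = j - 1" using j
        by (metis Nat.add_diff_assoc2 One_nat_def Suc_leI add.commute mod_add_self1 mod_less
            less_imp_diff_less neq0_conv)
      then show ?thesis using True False unfolding jf_def by simp
    qed
  next
    case False
    then have "jf = j1" unfolding jf_def by simp
    moreover have "j1 \<noteq> j"
    proof (cases "j + 1 < n")
      case True then show ?thesis unfolding j1_def by simp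
    next
      case False then have "j + 1 = n" using j by simp
      then show ?thesis unfolding j1_def using n2 by simp
    qed
    ultimately show ?thesis by simp
  qed
  define f where "f = es ! jf"
  have inc: "\<And>i. i < n \<Longrightarrow> p \<in> {src H (es ! i), tgt H (es ! i)} \<Longrightarrow> i = j \<or> i = jf"
  proof -
    fix i assume i: "i < n" and pi: "p \<in> {src H (es ! i), tgt H (es ! i)}"
    have i1: "(i + 1) mod n < n" using n0 by simp
    have pi': "p = xs ! i \<or> p = xs ! ((i + 1) mod n)" using pi h(7) i unfolding n_def by auto
    show "i = j \<or> i = jf"
    proof (cases "xs ! j = p")
      case True
      then have jf': "jf = (j + n - 1) mod n" unfolding jf_def by simp
      from pi' show ?thesis
      proof
        assume "p = xs ! i" then show ?thesis using True xsi i j by metis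
      next
        assume "p = xs ! ((i + 1) mod n)"
        then have "(i + 1) mod n = j" using True xsi i1 j by metis
        then show ?thesis using mod_pred_aux[OF i j(1)] jf' by simp
      qed
    next
      case False
      then have pj1: "xs ! j1 = p" using ej by (auto simp: doubleton_eq_iff)
      have jf': "jf = j1" using False unfolding jf_def by simp
      from pi' show ?thesis
      proof
        assume "p = xs ! i" then show ?thesis using pj1 xsi i j1n jf' by metis
      next
        assume "p = xs ! ((i + 1) mod n)"
        then have "(i + 1) mod n = j1" using pj1 xsi i1 j1n by metis
        then show ?thesis using mod_suc_inj[OF i j(1)] unfolding j1_def by simp
      qed
    qed
  qed
  have pf: "p \<in> {src H f, tgt H f}"
  proof (cases "xs ! j = p")
    case True
    then have jf': "jf = (j + n - 1) mod n" unfolding jf_def by simp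
    have "(jf + 1) mod n = j"
    proof (cases "j = 0")
      case True then show ?thesis using jf' n0 by simp
    next
      case False
      then have "(j + n - 1) mod n = j - 1" using j
        by (metis Nat.add_diff_assoc2 One_nat_def Suc_leI add.commute mod_add_self1 mod_less
            less_imp_diff_less neq0_conv)
      then show ?thesis using jf' False j by simp
    qed
    then show ?thesis using h(7) jfn True unfolding f_def n_def by auto
  next
    case False
    then have "jf = j1" unfolding jf_def by simp
    moreover have "xs ! j1 = p" using False ej by (auto simp: doubleton_eq_iff)
    ultimately show ?thesis using h(7) jfn unfolding f_def n_def by auto
  qed
  define F where "F = {e1, f}"
  have FE: "F \<subseteq> edges H" using h(5,6) jfn C(2) unfolding F_def f_def n_def by auto
  have cF: "card F \<le> 2" unfolding F_def by (simp add: card_insert_if)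
  have Finc: "\<forall>g\<in>F. p \<in> {src H g, tgt H g}" using pf e1(2) unfolding F_def by auto
  have jpq: "(p, q) \<in> (adj_rel H (E - F))\<^sup>*" using all FE cF unfolding joined_def E_def by blast
  have "(x1, q) \<in> (adj_rel H (E - F))\<^sup>*"
    using path_avoid[OF rest[unfolded R_def] p_rest Finc] .
  then have "(q, x1) \<in> (adj_rel H (E - F))\<^sup>*" by (rule joined_sym)
  with jpq have "(p, x1) \<in> (adj_rel H (E - F))\<^sup>*" by simp
  then have "(R (E - F))\<^sup>*\<^sup>* p x1" unfolding R_def by (simp add: rtranclp_rtrancl_eq)
  then obtain ws0 where "rtrancl_path (R (E - F)) p ws0 x1" using rtranclp_eq_rtrancl_path by metis
  then obtain ws where wpath: "rtrancl_path (R (E - F)) p ws x1" and dws: "distinct (p # ws)"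
    using rtrancl_path_distinct by metis
  have ws0: "ws \<noteq> []" using wpath p_x1 by (cases rule: rtrancl_path.cases) auto
  define m where "m = length ws"
  have m0: "0 < m" using ws0 unfolding m_def by simp
  define xs' where "xs' = p # ws"
  have lastw: "xs' ! m = x1" using rtrancl_path_last[OF wpath ws0] ws0 unfolding xs'_def m_def
    by (simp add: last_conv_nth)
  have steps: "\<And>i. i < m \<Longrightarrow> \<exists>e\<in>E - F. {src H e, tgt H e} = {xs' ! i, xs' ! (i + 1)}"
  proof -
    fix i assume "i < m"
    then have "R (E - F) ((p # ws) ! i) (ws ! i)" using rtrancl_path_nth[OF wpath] unfolding m_def by blast
    then obtain e where ee: "e \<in> E - F" "{src H e, tgt H e} = {(p # ws) ! i, ws ! i}"
      unfolding R_def adj_rel_iff by blast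
    have x1: "xs' ! (i + 1) = ws ! i" "xs' ! i = (p # ws) ! i" unfolding xs'_def by simp_all
    show "\<exists>e\<in>E - F. {src H e, tgt H e} = {xs' ! i, xs' ! (i + 1)}"
      apply (rule bexI[where x=e]) apply (simp only: x1 ee(2)) by (rule ee(1))
  qed
  define g where "g = (\<lambda>i. SOME e. e \<in> E - F \<and> {src H e, tgt H e} = {xs' ! i, xs' ! (i + 1)})"
  have g: "\<And>i. i < m \<Longrightarrow> g i \<in> E - F \<and> {src H (g i), tgt H (g i)} = {xs' ! i, xs' ! (i + 1)}"
  proof -
    fix i assume "i < m"
    then have "\<exists>e. e \<in> E - F \<and> {src H e, tgt H e} = {xs' ! i, xs' ! (i + 1)}" using steps by blast
    then show "g i \<in> E - F \<and> {src H (g i), tgt H (g i)} = {xs' ! i, xs' ! (i + 1)}"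
      unfolding g_def by (rule someI_ex)
  qed
  have dxs': "distinct xs'" and lxs': "length xs' = m + 1" using dws unfolding xs'_def m_def by auto
  have xsi': "\<And>a b. a \<le> m \<Longrightarrow> b \<le> m \<Longrightarrow> xs' ! a = xs' ! b \<longleftrightarrow> a = b"
    using dxs' lxs' by (simp add: nth_eq_iff_index_eq)
  have ginj: "inj_on g {0..<m}"
  proof
    fix a b assume a: "a \<in> {0..<m}" and b: "b \<in> {0..<m}" and gab: "g a = g b"
    have "{xs' ! a, xs' ! (a + 1)} = {xs' ! b, xs' ! (b + 1)}" using g a b gab by (metis atLeastLessThan_iff)
    then have dj: "(xs' ! a = xs' ! b \<and> xs' ! (a + 1) = xs' ! (b + 1)) \<or> (xs' ! a = xs' ! (b + 1) \<and> xs' ! (a + 1) = xs' ! b)"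
      by (auto simp: doubleton_eq_iff)
    have am: "a \<le> m" "a + 1 \<le> m" "b \<le> m" "b + 1 \<le> m" using a b by auto
    show "a = b"
    proof (rule disjE[OF dj])
      assume "xs' ! a = xs' ! b \<and> xs' ! (a + 1) = xs' ! (b + 1)"
      then show "a = b" using xsi'[OF am(1) am(3)] by simp
    next
      assume "xs' ! a = xs' ! (b + 1) \<and> xs' ! (a + 1) = xs' ! b"
      then have "a = b + 1" "a + 1 = b" using xsi'[OF am(1) am(4)] xsi'[OF am(2) am(3)] by simp_all
      then show "a = b" by simp
    qed
  qed
  define es' where "es' = map g [0..<m] @ [e1]"
  have les': "length es' = m + 1" unfolding es'_def by simp
  have e1F: "e1 \<in> F" unfolding F_def by simp
  have des': "distinct es'"
    unfolding es'_def using ginj g e1F by (auto simp: distinct_map)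
  have sc: "simple_cycle H (set es')"
    unfolding simple_cycle_def
  proof (intro exI[of _ es'] exI[of _ xs'] conjI allI impI)
    show "es' \<noteq> []" unfolding es'_def by simp
    show "distinct es'" by (rule des')
    show "distinct xs'" by (rule dxs')
    show "length xs' = length es'" using les' lxs' by simp
    show "set es' = set es'" ..
    show "set es' \<subseteq> edges H" unfolding es'_def using g e1(1) unfolding E_def by auto
    fix i assume i: "i < length es'"
    show "{src H (es' ! i), tgt H (es' ! i)} = {xs' ! i, xs' ! ((i + 1) mod length es')}"
    proof (cases "i < m")
      case True
      then have "es' ! i = g i" unfolding es'_def by (simp add: nth_append)
      moreover have "(i + 1) mod length es' = i + 1" using True les' by simp
      ultimately show ?thesis using g True by simp
    next
      case False
      then have im: "i = m" using i les' by simp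
      then have "es' ! i = e1" unfolding es'_def by (simp add: nth_append)
      moreover have "(i + 1) mod length es' = 0" using im les' by simp
      moreover have "xs' ! 0 = p" unfolding xs'_def by simp
      ultimately show ?thesis using e1(2) lastw im by auto
    qed
  qed
  have "set es' = C" using Cu[of "set es'"] sc unfolding es'_def by simp
  moreover have "g 0 \<in> set es'" using m0 unfolding es'_def by simp
  ultimately have "g 0 \<in> C" by simp
  then obtain i where i: "i < n" "es ! i = g 0" using h(5) unfolding n_def by (metis in_set_conv_nth)
  have "p \<in> {src H (g 0), tgt H (g 0)}" using g[OF m0] unfolding xs'_def by simp
  then have "i = j \<or> i = jf" using inc i by simp
  then have "g 0 \<in> F" using i j unfolding F_def f_def by auto
  then show False using g[OF m0] by simp
qed



lemma identify_graph_rn: "identify_graph G v w = rn (merge_vertex v w) G"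
  unfolding identify_graph_def rn_def by simp

lemma rn_comp: "rn r2 (rn r1 G) = rn (r2 \<circ> r1) G"
  unfolding rn_def by (simp add: image_comp comp_assoc)

lemma delta_rn: "delta X = rn (merge_vertex (vout X) (vin X)) (gr X)"
  unfolding delta_def identify_graph_rn ..

lemma resp_mono:
  assumes "\<forall>x\<in>V. \<forall>y\<in>V. r1 x = r1 y \<longrightarrow> r2 x = r2 y" "partition_on V P" "resp r2 V P"
  shows "resp r1 V P"
  unfolding resp_def
proof (intro ballI impI)
  fix B x y assume "B \<in> P" "x \<in> V" "y \<in> B" "r1 x = r1 y"
  moreover have "y \<in> V" using \<open>B \<in> P\<close> \<open>y \<in> B\<close> assms(2) unfolding partition_on_def by blast
  ultimately show "x \<in> B" using assms(1,3) unfolding resp_def by metis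
qed

lemma gm_verts: "verts (gr (gm_mult t s)) = (\<lambda>x. 2 * x) ` verts (gr t) \<union>
   (\<lambda>x. if x = vout s then 2 * vin t else 2 * x + 1) ` verts (gr s)"
  by (simp add: gm_mult_def Let_def)

lemma gm_edges: "edges (gr (gm_mult t s)) = (\<lambda>e. 2 * e) ` edges (gr t) \<union> (\<lambda>e. 2 * e + 1) ` edges (gr s)"
  by (simp add: gm_mult_def Let_def)

lemma gm_src_even: "src (gr (gm_mult t s)) (2 * e) = 2 * src (gr t) e"
  by (simp add: gm_mult_def Let_def)

lemma gm_tgt_even: "tgt (gr (gm_mult t s)) (2 * e) = 2 * tgt (gr t) e"
  by (simp add: gm_mult_def Let_def)

lemma gm_src_odd: "src (gr (gm_mult t s)) (2 * e + 1) = (if src (gr s) e = vout s then 2 * vin t else 2 * src (gr s) e + 1)"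
  by (simp add: gm_mult_def Let_def)

lemma gm_tgt_odd: "tgt (gr (gm_mult t s)) (2 * e + 1) = (if tgt (gr s) e = vout s then 2 * vin t else 2 * tgt (gr s) e + 1)"
  by (simp add: gm_mult_def Let_def)

lemma gm_vin: "vin (gm_mult t s) = (if vin s = vout s then 2 * vin t else 2 * vin s + 1)"
  by (simp add: gm_mult_def Let_def)

lemma gm_vout: "vout (gm_mult t s) = 2 * vout t"
  by (simp add: gm_mult_def Let_def)

definition gmap :: "nat \<Rightarrow> nat \<Rightarrow> nat \<Rightarrow> nat" where
  "gmap v w n = (if even n then 2 * merge_vertex v w (n div 2) else n)"

lemma gmap_even[simp]: "gmap v w (2 * x) = 2 * merge_vertex v w x"
  unfolding gmap_def by simp

lemma gmap_odd[simp]: "gmap v w (2 * x + 1) = 2 * x + 1"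
  unfolding gmap_def by simp

lemma gmap_Suc[simp]: "gmap v w (Suc (2 * x)) = Suc (2 * x)"
  unfolding gmap_def by simp

lemma gr_identify: "gr (identify t v w) = identify_graph (gr t) v w"
  unfolding identify_def by simp

lemma vin_identify: "vin (identify t v w) = merge_vertex v w (vin t)"
  unfolding identify_def by simp

lemma vout_identify: "vout (identify t v w) = merge_vertex v w (vout t)"
  unfolding identify_def by simp

lemma lab_identify_graph: "lab (identify_graph G v w) = lab G"
  unfolding identify_graph_def by simp

lemma gr_mult_identify:
  "gr (gm_mult (identify t v w) s) = rn (gmap v w) (gr (gm_mult t s))"
proof -
  define h where "h = (\<lambda>x. if x = vout s then 2 * vin t else 2 * x + 1)"
  define h' where "h' = (\<lambda>x. if x = vout s then 2 * merge_vertex v w (vin t) else 2 * x + 1)"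
  have hh: "\<And>y. gmap v w (h y) = h' y" unfolding h_def h'_def by simp
  have V: "verts (gr (gm_mult (identify t v w) s)) = verts (rn (gmap v w) (gr (gm_mult t s)))"
  proof -
    have "verts (gr (gm_mult (identify t v w) s)) = (\<lambda>x. 2 * merge_vertex v w x) ` verts (gr t) \<union> h' ` verts (gr s)"
      by (simp add: gm_mult_def Let_def identify_def identify_graph_def h'_def image_image)
    moreover have "verts (rn (gmap v w) (gr (gm_mult t s))) = (\<lambda>x. 2 * merge_vertex v w x) ` verts (gr t) \<union> h' ` verts (gr s)"
      unfolding rn_def gm_verts h_def[symmetric] using hh by (simp add: image_Un image_image)
    ultimately show ?thesis by simp
  qed
  have S: "src (gr (gm_mult (identify t v w) s)) = src (rn (gmap v w) (gr (gm_mult t s)))"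
  proof
    fix e show "src (gr (gm_mult (identify t v w) s)) e = src (rn (gmap v w) (gr (gm_mult t s))) e"
      by (cases "even e") (auto simp: gm_mult_def Let_def identify_def identify_graph_def rn_def gmap_def)
  qed
  have T: "tgt (gr (gm_mult (identify t v w) s)) = tgt (rn (gmap v w) (gr (gm_mult t s)))"
  proof
    fix e show "tgt (gr (gm_mult (identify t v w) s)) e = tgt (rn (gmap v w) (gr (gm_mult t s))) e"
      by (cases "even e") (auto simp: gm_mult_def Let_def identify_def identify_graph_def rn_def gmap_def)
  qed
  have E: "edges (gr (gm_mult (identify t v w) s)) = edges (rn (gmap v w) (gr (gm_mult t s)))"
    by (simp add: gm_mult_def Let_def identify_def identify_graph_def rn_def)
  have L: "lab (gr (gm_mult (identify t v w) s)) = lab (rn (gmap v w) (gr (gm_mult t s)))"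
    by (simp add: gm_mult_def Let_def gr_identify lab_identify_graph rn_def cong: if_cong)
  show ?thesis using V S T E L by (intro tgraph.equality) auto
qed

lemma vin_mult_identify: "vin (gm_mult (identify t v w) s) = gmap v w (vin (gm_mult t s))"
  by (simp add: gm_vin identify_def)

lemma vout_mult_identify: "vout (gm_mult (identify t v w) s) = gmap v w (vout (gm_mult t s))"
  by (simp add: gm_vout identify_def)

lemma merge_eq: "merge_vertex a b x = merge_vertex a b y \<Longrightarrow> x = y \<or> (x \<in> {a, b} \<and> y \<in> {a, b})"
  unfolding merge_vertex_def by (auto split: if_splits)

lemma gmap_eq:
  assumes "gmap v w x = gmap v w y" shows "x = y \<or> (x \<in> {2 * v, 2 * w} \<and> y \<in> {2 * v, 2 * w})"
proof (cases "even x")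
  case True
  show ?thesis
  proof (cases "even y")
    case True
    from \<open>even x\<close> True assms have "merge_vertex v w (x div 2) = merge_vertex v w (y div 2)"
      unfolding gmap_def by simp
    then have "x div 2 = y div 2 \<or> (x div 2 \<in> {v, w} \<and> y div 2 \<in> {v, w})" by (rule merge_eq)
    then show ?thesis using \<open>even x\<close> True by (auto elim!: evenE)
  next
    case False then show ?thesis using \<open>even x\<close> assms unfolding gmap_def by auto
  qed
next
  case False
  then show ?thesis using assms unfolding gmap_def by (auto split: if_splits)
qed

lemma lc_zero:
  assumes "\<forall>q\<in>set u. psi \<phi> (gm_mult t' (snd q)) = psi \<phi> (gm_mult t (snd q))"
  shows "lc_psi \<phi> (lc_mult (lc_diff [(1, t')] [(1, t)]) u) = 0"
  using assms
  by (induction u) (simp_all add: lc_psi_def lc_mult_def lc_diff_def algebra_simps)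

lemma psi_eq:
  fixes t s :: "'a::ring_1 gmono"
  assumes wt: "wf_gmono t" and ws: "wf_gmono s" and vV: "v \<in> verts (gr t)" and wV: "w \<in> verts (gr t)"
    and vw: "v \<noteq> w" and ec: "3 \<le> edge_conn (gr t) v w"
  shows "psi \<phi> (gm_mult (identify t v w) s) = psi \<phi> (gm_mult t s)"
proof -
  define G0 where "G0 = gr (gm_mult t s)"
  define V0 where "V0 = verts G0"
  define a where "a = vout (gm_mult t s)"
  define b where "b = vin (gm_mult t s)"
  define f' where "f' = merge_vertex (gmap v w a) (gmap v w b) \<circ> gmap v w"
  define r where "r = merge_vertex a b"
  have psi1: "psi \<phi> (gm_mult (identify t v w) s) = tau \<phi> (rn f' G0)"
    unfolding psi_def delta_rn gr_mult_identify vin_mult_identify vout_mult_identify rn_comp f'_def G0_def a_def b_def ..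
  have psi2: "psi \<phi> (gm_mult t s) = tau \<phi> (rn r G0)"
    unfolding psi_def delta_rn r_def G0_def a_def b_def ..
  have wft: "finite (verts (gr t))" "finite (edges (gr t))"
    "\<forall>e\<in>edges (gr t). src (gr t) e \<in> verts (gr t) \<and> tgt (gr t) e \<in> verts (gr t)"
    "vin t \<in> verts (gr t)" "vout t \<in> verts (gr t)"
    using wt unfolding wf_gmono_def wf_graph_def by auto
  have wfs: "finite (verts (gr s))" "finite (edges (gr s))"
    "\<forall>e\<in>edges (gr s). src (gr s) e \<in> verts (gr s) \<and> tgt (gr s) e \<in> verts (gr s)"
    "vin s \<in> verts (gr s)" "vout s \<in> verts (gr s)"
    using ws unfolding wf_gmono_def wf_graph_def by auto
  define hh where "hh = (\<lambda>x. if x = vout s then 2 * vin t else 2 * x + 1)"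
  have V0: "V0 = (\<lambda>x. 2 * x) ` verts (gr t) \<union> hh ` verts (gr s)"
    unfolding V0_def G0_def gm_verts hh_def ..
  have E0: "edges G0 = (\<lambda>e. 2 * e) ` edges (gr t) \<union> (\<lambda>e. 2 * e + 1) ` edges (gr s)"
    unfolding G0_def gm_edges ..
  have wfe: "wfe G0" unfolding wfe_def
  proof
    fix e assume "e \<in> edges G0"
    then consider (A) e' where "e' \<in> edges (gr t)" "e = 2 * e'" | (B) e' where "e' \<in> edges (gr s)" "e = 2 * e' + 1"
      unfolding E0 by blast
    then show "src G0 e \<in> verts G0 \<and> tgt G0 e \<in> verts G0"
    proof cases
      case A
      have "src G0 e = 2 * src (gr t) e'" "tgt G0 e = 2 * tgt (gr t) e'"
        using A unfolding G0_def by (simp_all add: gm_src_even gm_tgt_even)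
      then show ?thesis using wft(3) A unfolding V0_def[symmetric] V0 by auto
    next
      case B
      have "src G0 e = hh (src (gr s) e')" "tgt G0 e = hh (tgt (gr s) e')"
        unfolding B(2) G0_def hh_def gm_src_odd gm_tgt_odd by simp_all
      then show ?thesis using wfs(3) B unfolding V0_def[symmetric] V0 by auto
    qed
  qed
  have finV: "finite V0" unfolding V0 using wft(1) wfs(1) by simp
  have finE: "finite (edges G0)" unfolding E0 using wft(2) wfs(2) by simp
  have aV: "a \<in> V0" unfolding a_def gm_vout V0 using wft(5) by simp
  have bV: "b \<in> V0" unfolding b_def gm_vin V0 using wfs(4) by (auto simp: hh_def image_iff)
  have vV0: "2 * v \<in> V0" "2 * w \<in> V0" unfolding V0 using vV wV by auto
  have se: "\<And>e. src G0 (2 * e) = 2 * src (gr t) e" "\<And>e. tgt G0 (2 * e) = 2 * tgt (gr t) e"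
    unfolding G0_def by (simp_all add: gm_src_even gm_tgt_even)
  define S1 where "S1 = {P. partition_on V0 P \<and> resp f' V0 P}"
  define S2 where "S2 = {P. partition_on V0 P \<and> resp r V0 P}"
  have t1: "tau \<phi> (rn f' G0) = (\<Sum>P\<in>S1. tau0 \<phi> (quotient_graph G0 P))"
    unfolding S1_def V0_def by (rule tau_rn[OF wfe])
  have t2: "tau \<phi> (rn r G0) = (\<Sum>P\<in>S2. tau0 \<phi> (quotient_graph G0 P))"
    unfolding S2_def V0_def by (rule tau_rn[OF wfe])
  have kr: "\<forall>x\<in>V0. \<forall>y\<in>V0. r x = r y \<longrightarrow> f' x = f' y"
  proof (intro ballI impI)
    fix x y assume "r x = r y"
    then have "x = y \<or> (x \<in> {a, b} \<and> y \<in> {a, b})" unfolding r_def by (rule merge_eq)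
    then show "f' x = f' y" unfolding f'_def merge_vertex_def by auto
  qed
  have sub: "S1 \<subseteq> S2" unfolding S1_def S2_def using resp_mono[OF kr] by blast
  have finS2: "finite S2" unfolding S2_def
    by (rule finite_subset[OF _ finitely_many_partition_on[OF finV]]) blast
  have zero: "tau0 \<phi> (quotient_graph G0 P) = 0" if PS: "P \<in> S2 - S1" for P
  proof (rule ccontr)
    assume nz: "tau0 \<phi> (quotient_graph G0 P) \<noteq> 0"
    define H where "H = quotient_graph G0 P"
    define \<beta> where "\<beta> = block_of P"
    have Pp: "partition_on V0 P" "resp r V0 P" using PS unfolding S2_def by auto
    have nS1: "\<not> resp f' V0 P" using PS Pp unfolding S1_def by auto
    have oc: "oriented_cactus H"
    proof (rule ccontr)
      assume "\<not> oriented_cactus H"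
      then have "tau0 \<phi> H = 0" unfolding tau0_def by simp
      then show False using nz unfolding H_def by simp
    qed
    then have cac: "is_cactus H" unfolding oriented_cactus_def by blast
    then have uniq: "\<forall>e\<in>edges H. \<exists>!C. simple_cycle H C \<and> e \<in> C" unfolding is_cactus_def by blast
    have EH: "edges H = edges G0" unfolding H_def quotient_graph_def by simp
    have sH: "\<And>e. src H e = \<beta> (src G0 e)" "\<And>e. tgt H e = \<beta> (tgt G0 e)"
      unfolding H_def quotient_graph_def \<beta>_def by simp_all
    have bvw: "\<beta> (2 * v) = \<beta> (2 * w)"
    proof (rule ccontr)
      assume ne: "\<beta> (2 * v) \<noteq> \<beta> (2 * w)"
      have "\<forall>F\<subseteq>edges H. card F \<le> 2 \<longrightarrow> joined H (edges H - F) (\<beta> (2 * v)) (\<beta> (2 * w))"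
      proof (intro allI impI)
        fix F assume FH: "F \<subseteq> edges H" and cF: "card F \<le> 2"
        define Ft where "Ft = {e \<in> edges (gr t). 2 * e \<in> F}"
        have finF: "finite F" using FH EH finE finite_subset by metis
        have "card Ft \<le> card F"
          by (rule card_inj_on_le[of "\<lambda>e. 2 * e"]) (auto simp: Ft_def inj_on_def finF)
        then have cFt: "card Ft \<le> 2" using cF by linarith
        have FtE: "Ft \<subseteq> edges (gr t)" unfolding Ft_def by blast
        have jt: "joined (gr t) (edges (gr t) - Ft) v w"
        proof (rule ccontr)
          assume "\<not> joined (gr t) (edges (gr t) - Ft) v w"
          then have "\<exists>F'\<subseteq>edges (gr t). card F' = card Ft \<and> \<not> joined (gr t) (edges (gr t) - F') v w"
            using FtE by blast
          then have "edge_conn (gr t) v w \<le> card Ft" unfolding edge_conn_def by (rule Least_le)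
          then show False using ec cFt by simp
        qed
        have step: "(\<beta> (2 * x), \<beta> (2 * y)) \<in> adj_rel H (edges H - F)"
          if xy: "(x, y) \<in> adj_rel (gr t) (edges (gr t) - Ft)" for x y
        proof -
          obtain e where e: "e \<in> edges (gr t) - Ft"
            "(x, y) = (src (gr t) e, tgt (gr t) e) \<or> (x, y) = (tgt (gr t) e, src (gr t) e)"
            using xy unfolding adj_rel_def by blast
          have e2: "2 * e \<in> edges H - F" using e(1) unfolding EH E0 Ft_def by auto
          have "(\<beta> (2 * x), \<beta> (2 * y)) = (src H (2 * e), tgt H (2 * e)) \<or>
                (\<beta> (2 * x), \<beta> (2 * y)) = (tgt H (2 * e), src H (2 * e))"
            using e(2) unfolding sH se by auto
          then show ?thesis using e2 unfolding adj_rel_def by blast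
        qed
        show "joined H (edges H - F) (\<beta> (2 * v)) (\<beta> (2 * w))"
          unfolding joined_def by (rule rtrancl_map_gen[where f="\<lambda>x. \<beta> (2 * x)", OF jt[unfolded joined_def] step])
      qed
      then show False using cactus_cut[OF uniq ne] by blast
    qed
    have bab: "\<beta> a = \<beta> b"
    proof -
      have bb: "\<beta> b \<in> P \<and> b \<in> \<beta> b" unfolding \<beta>_def using block_of_in[OF Pp(1) bV] .
      have "r a = r b" unfolding r_def merge_vertex_def by simp
      then have "a \<in> \<beta> b" using Pp(2) bb aV unfolding resp_def by blast
      then show ?thesis unfolding \<beta>_def using block_of_eq[OF Pp(1)] bb unfolding \<beta>_def by blast
    qed
    have cls: "\<beta> z = \<beta> a" if "z \<in> V0" "gmap v w z \<in> {gmap v w a, gmap v w b}" for z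
    proof -
      from that(2) consider "gmap v w z = gmap v w a" | "gmap v w z = gmap v w b" by blast
      then show ?thesis
      proof cases
        case 1 then have "z = a \<or> (z \<in> {2 * v, 2 * w} \<and> a \<in> {2 * v, 2 * w})" by (rule gmap_eq)
        then show ?thesis using bvw by auto
      next
        case 2 then have "z = b \<or> (z \<in> {2 * v, 2 * w} \<and> b \<in> {2 * v, 2 * w})" by (rule gmap_eq)
        then show ?thesis using bvw bab by auto
      qed
    qed
    have "resp f' V0 P" unfolding resp_def
    proof (intro ballI impI)
      fix B x y assume B: "B \<in> P" and x: "x \<in> V0" and y: "y \<in> B" and fxy: "f' x = f' y"
      have yV: "y \<in> V0" using B y Pp(1) unfolding partition_on_def by blast
      have by': "\<beta> y = B" unfolding \<beta>_def using block_of_eq[OF Pp(1) B y] .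
      have "\<beta> x = \<beta> y"
      proof -
        from fxy have "gmap v w x = gmap v w y \<or> (gmap v w x \<in> {gmap v w a, gmap v w b} \<and> gmap v w y \<in> {gmap v w a, gmap v w b})"
          unfolding f'_def comp_def by (rule merge_eq)
        then show ?thesis
        proof
          assume "gmap v w x = gmap v w y"
          then have "x = y \<or> (x \<in> {2 * v, 2 * w} \<and> y \<in> {2 * v, 2 * w})" by (rule gmap_eq)
          then show ?thesis using bvw by auto
        next
          assume "gmap v w x \<in> {gmap v w a, gmap v w b} \<and> gmap v w y \<in> {gmap v w a, gmap v w b}"
          then have "\<beta> x = \<beta> a" "\<beta> y = \<beta> a" using cls[OF x] cls[OF yV] by simp_all
          then show ?thesis by simp
        qed
      qed
      then show "x \<in> B" using block_of_in[OF Pp(1) x] by' unfolding \<beta>_def by simp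
    qed
    then show False using nS1 by simp
  qed
  have "(\<Sum>P\<in>S1. tau0 \<phi> (quotient_graph G0 P)) = (\<Sum>P\<in>S2. tau0 \<phi> (quotient_graph G0 P))"
    by (rule sum.mono_neutral_left[OF finS2 sub]) (use zero in blast)
  then show ?thesis unfolding psi1 psi2 t1 t2 .
qed


theorem corollary2p7:
  fixes sc :: "complex \<Rightarrow> 'a::ring_1 \<Rightarrow> 'a" and \<phi> :: "'a \<Rightarrow> complex"
    and t :: "'a gmono" and v w :: nat
  assumes "complex_algebra sc" and "tracial_state sc \<phi>"
    and "wf_gmono t"
    and "v \<in> verts (gr t)" and "w \<in> verts (gr t)" and "v \<noteq> w"
    and "3 \<le> edge_conn (gr t) v w"
  shows "equiv_mod_psi \<phi> [(1, identify t v w)] [(1, t)]"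
  unfolding equiv_mod_psi_def
proof (intro allI impI)
  fix u :: "'a lcomb" assume "wf_lcomb u"
  then have "\<forall>q\<in>set u. psi \<phi> (gm_mult (identify t v w) (snd q)) = psi \<phi> (gm_mult t (snd q))"
    using psi_eq[OF assms(3) _ assms(4-7)] unfolding wf_lcomb_def by blast
  then show "lc_psi \<phi> (lc_mult (lc_diff [(1, identify t v w)] [(1, t)]) u) = 0" by (rule lc_zero)
qed

end
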